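(* Let $n\ge1$ and let $\alpha=(a_n,\ldots,a_1)$ be a restricted sequence. Write $e'_\alpha=\sum_{\beta}P_\beta\, e_\beta$ with $P_\beta\in\mathbb{Q}(q)$, the sum over restricted sequences $\beta$ of length $n$. Then $P_\beta\neq0$ if and only if $\beta\preccurlyeq\alpha$.
   Context: $D_n$: non-crossing perfect matchings of $\{1,\ldots,2n\}$ (non-crossing $n$-chord diagrams), $D_0=\{\phi\}$. For $1\le k\le 2n+1$, $l_k:D_n\to D_{n+1}$: $l_k(\alpha)$ matches $k$ with $k+1$, old point $i$ becomes $i$ if $i<k$ and $i+2$ if $i\ge k$. Restricted sequence of $\alpha\in D_n$: let $k_n$ be the smallest $k$ with $k$ matched to $k+1$; it is $(k_n,k_{n-1},\ldots,k_1)$ with $(k_{n-1},\ldots,k_1)$ the restricted sequence of $\alpha$ with that arc removed (empty for $\phi$). This is a bijection from $D_n$ to restricted sequences of length $n$; $e_{(a_n,\ldots,a_1)}$ denotes the corresponding diagram. $\preccurlyeq$ is the coordinatewise order on restricted sequences: $(b_n,\ldots,b_1)\preccurlyeq(a_n,\ldots,a_1)$ iff $b_i\le a_i$ for all $i$. $V_n$: $\mathbb{Q}(q)$-vector space with basis $D_n$, $l_k$ extended linearly. $\Delta_{-1}=0$, $\Delta_0=1$, $\Delta_k=q\Delta_{k-1}-\Delta_{k-2}$. $e'$: $e'_{(1)}=e_{(1)}$; for $n\ge2$, $e'_{(a_n,\ldots,a_1)}=l_{a_n}(e'_{(a_{n-1},\ldots,a_1)})-\frac{\Delta_{a_n-2}}{\Delta_{a_n-1}}e'_{(a_n-1,a_{n-1},\ldots,a_1)}$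 if $a_n\ge2$, and $e'_{(1,a_{n-1},\ldots,a_1)}=l_1(e'_{(a_{n-1},\ldots,a_1)})$. *)

theory Defs
  imports "HOL-Computational_Algebra.Polynomial" "HOL-Computational_Algebra.Fraction_Field"
begin

text \<open>A chord diagram is a set of arcs (i,j) with i < j.\<close>
type_synonym diagram = "(nat \<times> nat) set"

definition Dn :: "nat \<Rightarrow> diagram set" where
  "Dn n = {\<alpha>. (\<forall>(i,j)\<in>\<alpha>. 1 \<le> i \<and> i < j \<and> j \<le> 2*n)
            \<and> (\<forall>p\<in>{1..2*n}. \<exists>!e. e \<in> \<alpha> \<and> (fst e = p \<or> snd e = p))
            \<and> (\<forall>(a,c)\<in>\<alpha>. \<forall>(b,d)\<in>\<alpha>. \<not> (a < b \<and> b < c \<and> c < d))}"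

definition sh :: "nat \<Rightarrow> nat \<Rightarrow> nat" where
  "sh k i = (if i < k then i else i + 2)"

definition lk :: "nat \<Rightarrow> diagram \<Rightarrow> diagram" where
  "lk k \<alpha> = insert (k, k+1) ((\<lambda>(i,j). (sh k i, sh k j)) ` \<alpha>)"

definition ush :: "nat \<Rightarrow> nat \<Rightarrow> nat" where
  "ush k i = (if i < k then i else i - 2)"

definition remove_arc :: "nat \<Rightarrow> diagram \<Rightarrow> diagram" where
  "remove_arc k \<alpha> = (\<lambda>(i,j). (ush k i, ush k j)) ` (\<alpha> - {(k, k+1)})"

text \<open>Restricted sequence of a diagram in D_n, as the list [k_n, ..., k_1].\<close>
fun rseq :: "nat \<Rightarrow> diagram \<Rightarrow> nat list" where
  "rseq 0 \<alpha> = []"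
| "rseq (Suc n) \<alpha> = (let k = (LEAST k. (k, k+1) \<in> \<alpha>) in k # rseq n (remove_arc k \<alpha>))"

text \<open>Restricted sequences of length n (image of the bijection).\<close>
definition RS :: "nat \<Rightarrow> nat list set" where
  "RS n = rseq n ` Dn n"

definition edia :: "nat list \<Rightarrow> diagram" where
  "edia \<beta> = (THE \<alpha>. \<alpha> \<in> Dn (length \<beta>) \<and> rseq (length \<beta>) \<alpha> = \<beta>)"

text \<open>The field Q(q) of rational functions, and its indeterminate q.\<close>
type_synonym Qq = "rat poly fract"

definition qq :: Qq where "qq = Fract [:0, 1:] 1"

fun Delta :: "nat \<Rightarrow> Qq" where
  "Delta 0 = 1"
| "Delta (Suc 0) = qq"
| "Delta (Suc (Suc k)) = qq * Delta (Suc k) - Delta k"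

text \<open>Vectors of V_n: coefficient functions on diagrams (supported on D_n).\<close>
definition basis :: "diagram \<Rightarrow> diagram \<Rightarrow> Qq" where
  "basis \<alpha> = (\<lambda>\<gamma>. if \<gamma> = \<alpha> then 1 else 0)"

definition lin_l :: "nat \<Rightarrow> nat \<Rightarrow> (diagram \<Rightarrow> Qq) \<Rightarrow> diagram \<Rightarrow> Qq" where
  "lin_l n k v = (\<lambda>\<delta>. \<Sum>\<gamma>\<in>Dn n. if lk k \<gamma> = \<delta> then v \<gamma> else 0)"

function eprime :: "nat list \<Rightarrow> diagram \<Rightarrow> Qq" where
  "eprime [] = basis {}"
| "eprime [a] = basis (edia [a])"
| "eprime (a # b # rest) =
     (if 2 \<le> a then
        (\<lambda>\<gamma>. lin_l (length (b # rest)) a (eprime (b # rest)) \<gamma>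
              - (Delta (a - 2) / Delta (a - 1)) * eprime ((a - 1) # b # rest) \<gamma>)
      else lin_l (length (b # rest)) 1 (eprime (b # rest)))"
  by pat_completeness auto
termination
  by (relation "measures [length, \<lambda>xs. hd xs]") auto

end

theory Submission
  imports Defs
begin


lemma Dn_arc: "\<delta> \<in> Dn n \<Longrightarrow> (i,j) \<in> \<delta> \<Longrightarrow> 1 \<le> i \<and> i < j \<and> j \<le> 2*n"
  unfolding Dn_def by blast

lemma Dn_cover: assumes "\<delta> \<in> Dn n" "1 \<le> p" "p \<le> 2*n" shows "\<exists>e\<in>\<delta>. fst e = p \<or> snd e = p"
proof -
  have "p \<in> {1..2*n}" using assms by simp
  then have "\<exists>!e. e \<in> \<delta> \<and> (fst e = p \<or> snd e = p)" using assms(1) unfolding Dn_def by blast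
  then show ?thesis by blast
qed

lemma Dn_uniq: "\<delta> \<in> Dn n \<Longrightarrow> e1 \<in> \<delta> \<Longrightarrow> e2 \<in> \<delta> \<Longrightarrow> fst e1 = p \<or> snd e1 = p
   \<Longrightarrow> fst e2 = p \<or> snd e2 = p \<Longrightarrow> e1 = e2"
proof -
  assume a: "\<delta> \<in> Dn n" "e1 \<in> \<delta>" "e2 \<in> \<delta>" "fst e1 = p \<or> snd e1 = p" "fst e2 = p \<or> snd e2 = p"
  obtain i j where e1: "e1 = (i,j)" by (cases e1)
  have r: "1 \<le> i \<and> i < j \<and> j \<le> 2*n" using Dn_arc[OF a(1) a(2)[unfolded e1]] .
  have "p \<in> {1..2*n}" using a(4) r e1 by auto
  then have "\<exists>!e. e \<in> \<delta> \<and> (fst e = p \<or> snd e = p)" using a(1) unfolding Dn_def by blast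
  then show ?thesis using a by blast
qed

lemma Dn_nc: "\<delta> \<in> Dn n \<Longrightarrow> (a,c) \<in> \<delta> \<Longrightarrow> (b,d) \<in> \<delta> \<Longrightarrow> \<not>(a<b \<and> b<c \<and> c<d)"
  unfolding Dn_def by fast

lemma DnI:
  assumes "\<And>i j. (i,j) \<in> \<delta> \<Longrightarrow> 1 \<le> i \<and> i < j \<and> j \<le> 2*n"
    and "\<And>p. 1 \<le> p \<Longrightarrow> p \<le> 2*n \<Longrightarrow> \<exists>e\<in>\<delta>. fst e = p \<or> snd e = p"
    and "\<And>e1 e2 p. e1 \<in> \<delta> \<Longrightarrow> e2 \<in> \<delta> \<Longrightarrow> fst e1 = p \<or> snd e1 = p
          \<Longrightarrow> fst e2 = p \<or> snd e2 = p \<Longrightarrow> e1 = e2"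
    and "\<And>a b c d. (a,c) \<in> \<delta> \<Longrightarrow> (b,d) \<in> \<delta> \<Longrightarrow> \<not>(a<b \<and> b<c \<and> c<d)"
  shows "\<delta> \<in> Dn n"
proof -
  have A: "\<forall>(i,j)\<in>\<delta>. 1 \<le> i \<and> i < j \<and> j \<le> 2*n" using assms(1) by blast
  have B: "\<forall>p\<in>{1..2*n}. \<exists>!e. e \<in> \<delta> \<and> (fst e = p \<or> snd e = p)"
  proof
    fix p assume "p \<in> {1..2*n}"
    then have "1 \<le> p" "p \<le> 2*n" by auto
    from assms(2)[OF this] obtain e where "e \<in> \<delta>" "fst e = p \<or> snd e = p" by blast
    then show "\<exists>!e. e \<in> \<delta> \<and> (fst e = p \<or> snd e = p)" using assms(3) by blast
  qed
  have C: "\<forall>(a,c)\<in>\<delta>. \<forall>(b,d)\<in>\<delta>. \<not> (a < b \<and> b < c \<and> c < d)" using assms(4) by blast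
  show ?thesis unfolding Dn_def using A B C by blast
qed

lemma Dn_other:
  assumes "\<delta> \<in> Dn n" "(k,k+1) \<in> \<delta>" "(x,y) \<in> \<delta>" "(x,y) \<noteq> (k,k+1)"
  shows "x \<noteq> k \<and> x \<noteq> k+1 \<and> y \<noteq> k \<and> y \<noteq> k+1"
proof -
  have "\<And>p. p = k \<or> p = k+1 \<Longrightarrow> x = p \<or> y = p \<Longrightarrow> False"
  proof -
    fix p assume "p = k \<or> p = k+1" "x = p \<or> y = p"
    then have "(x,y) = (k,k+1)"
      using Dn_uniq[OF assms(1) assms(3) assms(2), of p] by auto
    then show False using assms(4) by simp
  qed
  then show ?thesis by blast
qed

lemma finite_Dn: "finite (Dn n)"
proof -
  have "Dn n \<subseteq> Pow ({1..2*n} \<times> {1..2*n})"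
  proof
    fix \<delta> assume d: "\<delta> \<in> Dn n"
    show "\<delta> \<in> Pow ({1..2*n} \<times> {1..2*n})"
    proof (rule PowI, rule subsetI)
      fix e assume "e \<in> \<delta>"
      then have "(fst e, snd e) \<in> \<delta>" by simp
      from Dn_arc[OF d this] have "fst e \<in> {1..2*n}" "snd e \<in> {1..2*n}" by auto
      then show "e \<in> {1..2*n} \<times> {1..2*n}" by (simp add: mem_Times_iff)
    qed
  qed
  then show ?thesis
  proof (rule finite_subset)
    show "finite (Pow ({1..2*n} \<times> {1..2*n}))" by blast
  qed
qed

lemma Dn0: assumes "\<delta> \<in> Dn 0" shows "\<delta> = {}"
proof (rule equals0I)
  fix e assume "e \<in> \<delta>"
  then have "(fst e, snd e) \<in> \<delta>" by simp
  from Dn_arc[OF assms this] show False by linarith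
qed


lemma sh_ush: "x \<noteq> k \<Longrightarrow> x \<noteq> k+1 \<Longrightarrow> sh k (ush k x) = x"
  unfolding sh_def ush_def by auto
lemma ush_sh: "ush k (sh k x) = x"
  by (simp add: sh_def ush_def)
lemma sh_ne: "sh k x \<noteq> k" "sh k x \<noteq> k+1"
  by (auto simp add: sh_def)

lemma remove_lk: "remove_arc k (lk k \<gamma>) = \<gamma>"
proof -
  let ?F = "\<lambda>(i,j). (sh k i, sh k j)"
  have 1: "lk k \<gamma> - {(k,k+1)} = ?F ` \<gamma>"
    unfolding lk_def using sh_ne by auto
  have 2: "(\<lambda>(i,j). (ush k i, ush k j)) ` (?F ` \<gamma>) = \<gamma>"
    by (force simp: image_image ush_sh case_prod_beta)
  show ?thesis unfolding remove_arc_def 1 2 ..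
qed

lemma lk_remove:
  assumes d: "\<delta> \<in> Dn n" and k: "(k,k+1) \<in> \<delta>"
  shows "lk k (remove_arc k \<delta>) = \<delta>"
proof -
  let ?F = "\<lambda>(i,j). (sh k i, sh k j)"
  let ?G = "\<lambda>(i,j). (ush k i, ush k j)"
  have "?F ` (?G ` (\<delta> - {(k,k+1)})) = \<delta> - {(k,k+1)}"
  proof -
    have "\<And>e. e \<in> \<delta> - {(k,k+1)} \<Longrightarrow> ?F (?G e) = e"
    proof -
      fix e assume e: "e \<in> \<delta> - {(k,k+1)}"
      obtain x y where xy: "e = (x,y)" by (cases e)
      have "x \<noteq> k \<and> x \<noteq> k+1 \<and> y \<noteq> k \<and> y \<noteq> k+1"
        using Dn_other[OF d k, of x y] e xy by auto
      then show "?F (?G e) = e" using xy by (simp add: sh_ush)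
    qed
    then show ?thesis by (simp add: image_image) 
  qed
  then show ?thesis unfolding lk_def remove_arc_def using k by auto
qed

lemma remove_lk_commute:
  assumes d: "\<gamma> \<in> Dn n" and b: "(b,b+1) \<in> \<gamma>" and bk: "b+1 < k"
  shows "remove_arc b (lk k \<gamma>) = lk (k-2) (remove_arc b \<gamma>)"
proof -
  let ?F = "\<lambda>(i,j). (sh k i, sh k j)"
  let ?G = "\<lambda>(i,j). (ush b i, ush b j)"
  let ?F2 = "\<lambda>(i,j). (sh (k-2) i, sh (k-2) j)"
  have bk': "(b, b+1) \<noteq> (k,k+1)" using bk by auto
  have Fb: "?F (b,b+1) = (b,b+1)" using bk by (simp add: sh_def)
  have 1: "lk k \<gamma> - {(b,b+1)} = insert (k,k+1) (?F ` (\<gamma> - {(b,b+1)}))"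
  proof -
    have "?F ` \<gamma> - {(b,b+1)} = ?F ` (\<gamma> - {(b,b+1)})"
    proof -
      have "inj ?F" by (rule injI) (auto simp: sh_def split: if_splits)
      then have "?F ` (\<gamma> - {(b,b+1)}) = ?F ` \<gamma> - ?F ` {(b,b+1)}" by (rule image_set_diff)
      then show ?thesis using Fb by simp
    qed
    then show ?thesis unfolding lk_def using bk' by blast
  qed
  have 2: "\<And>e. e \<in> \<gamma> - {(b,b+1)} \<Longrightarrow> ?G (?F e) = ?F2 (?G e)"
  proof -
    fix e assume e: "e \<in> \<gamma> - {(b,b+1)}"
    obtain x y where xy: "e = (x,y)" by (cases e)
    have "x \<noteq> b \<and> x \<noteq> b+1 \<and> y \<noteq> b \<and> y \<noteq> b+1"
      using Dn_other[OF d b, of x y] e xy by auto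
    then show "?G (?F e) = ?F2 (?G e)" using xy bk by (auto simp: sh_def ush_def)
  qed
  have 3: "?G (k,k+1) = (k-2, k-2+1)" using bk by (auto simp: ush_def)
  have "remove_arc b (lk k \<gamma>) = insert (k-2, k-2+1) (?G ` ?F ` (\<gamma> - {(b,b+1)}))"
    unfolding remove_arc_def 1 using 3 by simp
  also have "?G ` ?F ` (\<gamma> - {(b,b+1)}) = ?F2 ` ?G ` (\<gamma> - {(b,b+1)})"
    unfolding image_image by (rule image_cong[OF refl]) (rule 2)
  finally show ?thesis unfolding lk_def remove_arc_def by simp
qed



lemma exists_adj:
  assumes d: "\<delta> \<in> Dn (Suc n)"
  shows "\<exists>k. (k,k+1) \<in> \<delta>"
proof -
  obtain e0 where "e0 \<in> \<delta>" using Dn_cover[OF d, of 1] by auto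
  then obtain e where e: "e \<in> \<delta>" and emin: "\<And>e'. e' \<in> \<delta> \<Longrightarrow> snd e - fst e \<le> snd e' - fst e'"
    using ex_has_least_nat[of "\<lambda>e. e \<in> \<delta>" e0 "\<lambda>e. snd e - fst e"] by blast
  obtain i j where ij: "e = (i,j)" by (cases e)
  have r: "1 \<le> i" "i < j" "j \<le> 2 * Suc n" using Dn_arc[OF d, of i j] e ij by auto
  show ?thesis
  proof (cases "j = i+1")
    case True then show ?thesis using e ij by blast
  next
    case False
    then have ji: "i + 2 \<le> j" using r by auto
    obtain e' where e': "e' \<in> \<delta>" "fst e' = i+1 \<or> snd e' = i+1"
      using Dn_cover[OF d, of "i+1"] r ji by auto
    obtain c d' where cd: "e' = (c,d')" by (cases e')
    have r': "1 \<le> c" "c < d'" using Dn_arc[OF d, of c d'] e' cd by auto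
    show ?thesis
    proof (cases "c = i+1")
      case True
      have "d' \<noteq> j"
      proof
        assume "d' = j"
        then have "e' = e" using Dn_uniq[OF d e'(1) e, of j] ij cd by auto
        then show False using True ij cd by simp
      qed
      moreover have "\<not> (i < c \<and> c < j \<and> j < d')" using Dn_nc[OF d, of i j c d'] e ij e' cd by auto
      ultimately have "d' < j" using True ji r' by auto
      then have "snd e' - fst e' < snd e - fst e" using True ij cd r' by auto
      then show ?thesis using emin[OF e'(1)] by simp
    next
      case False
      then have dd: "d' = i+1" using e' cd by auto
      have "c \<noteq> i"
      proof
        assume "c = i"
        then have "e' = e" using Dn_uniq[OF d e'(1) e, of i] ij cd by auto
        then show False using dd ij cd ji by simp
      qed
      then have "c < i" using dd r' by auto
      moreover have "\<not> (c < i \<and> i < d' \<and> d' < j)" using Dn_nc[OF d, of c d' i j] e ij e' cd by auto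
      ultimately show ?thesis using dd ji by auto
    qed
  qed
qed

lemma ush_mono: "x \<noteq> k \<Longrightarrow> x \<noteq> k+1 \<Longrightarrow> y \<noteq> k \<Longrightarrow> y \<noteq> k+1 \<Longrightarrow> (ush k x < ush k y) = (x < y)"
  unfolding ush_def by auto
lemma ush_inj: "x \<noteq> k \<Longrightarrow> x \<noteq> k+1 \<Longrightarrow> y \<noteq> k \<Longrightarrow> y \<noteq> k+1 \<Longrightarrow> (ush k x = ush k y) = (x = y)"
  unfolding ush_def by auto

lemma remove_Dn:
  assumes d: "\<delta> \<in> Dn (Suc n)" and k: "(k,k+1) \<in> \<delta>"
  shows "remove_arc k \<delta> \<in> Dn n"
proof -
  let ?G = "\<lambda>(i,j). (ush k i, ush k j)"
  have kr: "1 \<le> k" "k+1 \<le> 2 * Suc n" using Dn_arc[OF d k] by auto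
  have oth: "\<And>x y. (x,y) \<in> \<delta> - {(k,k+1)} \<Longrightarrow> x \<noteq> k \<and> x \<noteq> k+1 \<and> y \<noteq> k \<and> y \<noteq> k+1 \<and> 1 \<le> x \<and> x < y \<and> y \<le> 2 * Suc n"
    using Dn_other[OF d k] Dn_arc[OF d] by blast
  have mem: "\<And>e. e \<in> remove_arc k \<delta> \<Longrightarrow> \<exists>x y. (x,y) \<in> \<delta> - {(k,k+1)} \<and> e = (ush k x, ush k y)"
    unfolding remove_arc_def by auto
  show ?thesis
  proof (rule DnI)
    fix i j assume "(i,j) \<in> remove_arc k \<delta>"
    then obtain x y where xy: "(x,y) \<in> \<delta> - {(k,k+1)}" "(i,j) = (ush k x, ush k y)" using mem by blast
    show "1 \<le> i \<and> i < j \<and> j \<le> 2 * n" using oth[OF xy(1)] xy(2) kr unfolding ush_def by auto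
  next
    fix p assume p: "1 \<le> p" "p \<le> 2 * n"
    let ?z = "sh k p"
    have z: "?z \<noteq> k" "?z \<noteq> k+1" "1 \<le> ?z" "?z \<le> 2 * Suc n" using p kr by (auto simp: sh_def)
    obtain e where e: "e \<in> \<delta>" "fst e = ?z \<or> snd e = ?z" using Dn_cover[OF d z(3) z(4)] by blast
    obtain x y where xy: "e = (x,y)" by (cases e)
    have ne: "(x,y) \<noteq> (k,k+1)" using e xy z by auto
    have "(ush k x, ush k y) \<in> remove_arc k \<delta>" unfolding remove_arc_def using e xy ne by force
    moreover have "ush k x = p \<or> ush k y = p" using e xy ush_sh[of k p] by auto
    ultimately show "\<exists>e\<in>remove_arc k \<delta>. fst e = p \<or> snd e = p" by force
  next
    fix e1 e2 p assume a: "e1 \<in> remove_arc k \<delta>" "e2 \<in> remove_arc k \<delta>" "fst e1 = p \<or> snd e1 = p" "fst e2 = p \<or> snd e2 = p"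
    obtain x1 y1 where 1: "(x1,y1) \<in> \<delta> - {(k,k+1)}" "e1 = (ush k x1, ush k y1)" using mem a(1) by blast
    obtain x2 y2 where 2: "(x2,y2) \<in> \<delta> - {(k,k+1)}" "e2 = (ush k x2, ush k y2)" using mem a(2) by blast
    obtain z1 where z1: "z1 = x1 \<or> z1 = y1" "ush k z1 = p" using a(3) 1 by auto
    obtain z2 where z2: "z2 = x2 \<or> z2 = y2" "ush k z2 = p" using a(4) 2 by auto
    have "z1 = z2" using ush_inj[of z1 k z2] oth[OF 1(1)] oth[OF 2(1)] z1 z2 by auto
    then have "(x1,y1) = (x2,y2)" using Dn_uniq[OF d, of "(x1,y1)" "(x2,y2)" z1] 1 2 z1 z2 by auto
    then show "e1 = e2" using 1 2 by simp
  next
    fix a b c dd assume a: "(a,c) \<in> remove_arc k \<delta>" "(b,dd) \<in> remove_arc k \<delta>"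
    obtain x1 y1 where 1: "(x1,y1) \<in> \<delta> - {(k,k+1)}" "(a,c) = (ush k x1, ush k y1)" using mem a(1) by blast
    obtain x2 y2 where 2: "(x2,y2) \<in> \<delta> - {(k,k+1)}" "(b,dd) = (ush k x2, ush k y2)" using mem a(2) by blast
    have "\<not> (x1 < x2 \<and> x2 < y1 \<and> y1 < y2)" using Dn_nc[OF d, of x1 y1 x2 y2] 1 2 by auto
    then show "\<not> (a < b \<and> b < c \<and> c < dd)"
      using 1 2 oth[OF 1(1)] oth[OF 2(1)] ush_mono[of _ k] by auto
  qed
qed




definition lst :: "diagram \<Rightarrow> nat" where "lst \<delta> = (LEAST k. (k,k+1) \<in> \<delta>)"

lemma lst: assumes "\<delta> \<in> Dn (Suc n)"
  shows "(lst \<delta>, lst \<delta> + 1) \<in> \<delta>" "\<And>k. (k,k+1) \<in> \<delta> \<Longrightarrow> lst \<delta> \<le> k"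
proof -
  obtain k where "(k,k+1) \<in> \<delta>" using exists_adj[OF assms] by blast
  then show "(lst \<delta>, lst \<delta> + 1) \<in> \<delta>" unfolding lst_def by (rule LeastI)
  show "\<And>k. (k,k+1) \<in> \<delta> \<Longrightarrow> lst \<delta> \<le> k" unfolding lst_def by (rule Least_le)
qed

lemma rseq_Suc: "rseq (Suc n) \<delta> = lst \<delta> # rseq n (remove_arc (lst \<delta>) \<delta>)"
  by (simp add: lst_def Let_def)

declare rseq.simps(2) [simp del]

fun ins :: "nat \<Rightarrow> nat list \<Rightarrow> nat list" where
  "ins k [] = [k]"
| "ins k (b # bs) = (if b + 1 < k then b # ins (k-2) bs else k # b # bs)"

lemma lst_eq: "(k,k+1) \<in> \<delta> \<Longrightarrow> (\<And>i. (i,i+1) \<in> \<delta> \<Longrightarrow> k \<le> i) \<Longrightarrow> lst \<delta> = k"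
  unfolding lst_def by (rule Least_equality) auto

lemma rseq_lk: "\<gamma> \<in> Dn n \<Longrightarrow> rseq (Suc n) (lk k \<gamma>) = ins k (rseq n \<gamma>)"
proof (induction n arbitrary: \<gamma> k)
  case 0
  then have "\<gamma> = {}" by (rule Dn0)
  then have "lk k \<gamma> = {(k,k+1)}" unfolding lk_def by simp
  then have "lst (lk k \<gamma>) = k" by (intro lst_eq) auto
  then show ?case by (simp add: rseq_Suc)
next
  case (Suc m)
  define b where "b = lst \<gamma>"
  have b: "(b,b+1) \<in> \<gamma>" "\<And>i. (i,i+1) \<in> \<gamma> \<Longrightarrow> b \<le> i" using lst[OF Suc.prems] b_def by auto
  define \<gamma>' where "\<gamma>' = remove_arc b \<gamma>"
  have g': "\<gamma>' \<in> Dn m" using remove_Dn[OF Suc.prems b(1)] \<gamma>'_def by simp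
  have rg: "rseq (Suc m) \<gamma> = b # rseq m \<gamma>'" using rseq_Suc b_def \<gamma>'_def by simp
  show ?case
  proof (cases "b + 1 < k")
    case True
    have "lst (lk k \<gamma>) = b"
    proof (rule lst_eq)
      show "(b, b+1) \<in> lk k \<gamma>" unfolding lk_def using b(1) True
        by (auto simp: sh_def image_iff intro!: bexI[of _ "(b,b+1)"])
    next
      fix i assume "(i,i+1) \<in> lk k \<gamma>"
      then have "(i,i+1) = (k,k+1) \<or> (\<exists>x y. (x,y) \<in> \<gamma> \<and> i = sh k x \<and> i + 1 = sh k y)"
        unfolding lk_def by auto
      then show "b \<le> i"
      proof
        assume "(i,i+1) = (k,k+1)" then show ?thesis using True by simp
      next
        assume "\<exists>x y. (x,y) \<in> \<gamma> \<and> i = sh k x \<and> i + 1 = sh k y"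
        then obtain x y where xy: "(x,y) \<in> \<gamma>" "i = sh k x" "i + 1 = sh k y" by blast
        have "x < y" using Dn_arc[OF Suc.prems xy(1)] by simp
        show ?thesis
        proof (cases "y < k")
          case True
          then have "x < k" using \<open>x<y\<close> by simp
          then have "y = x + 1" "i = x" using xy True by (auto simp: sh_def)
          then show ?thesis using b(2) xy(1) by simp
        next
          case False
          then show ?thesis using xy \<open>x<y\<close> \<open>b+1<k\<close> by (auto simp: sh_def split: if_splits)
        qed
      qed
    qed
    then have "rseq (Suc (Suc m)) (lk k \<gamma>) = b # rseq (Suc m) (remove_arc b (lk k \<gamma>))"
      by (simp add: rseq_Suc)
    also have "remove_arc b (lk k \<gamma>) = lk (k-2) \<gamma>'"
      using remove_lk_commute[OF Suc.prems b(1) True] \<gamma>'_def by simp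
    also have "rseq (Suc m) (lk (k-2) \<gamma>') = ins (k-2) (rseq m \<gamma>')" using Suc.IH[OF g'] .
    finally show ?thesis using rg True by simp
  next
    case False
    have "lst (lk k \<gamma>) = k"
    proof (rule lst_eq)
      show "(k, k+1) \<in> lk k \<gamma>" unfolding lk_def by simp
    next
      fix i assume "(i,i+1) \<in> lk k \<gamma>"
      then have "(i,i+1) = (k,k+1) \<or> (\<exists>x y. (x,y) \<in> \<gamma> \<and> i = sh k x \<and> i + 1 = sh k y)"
        unfolding lk_def by auto
      then show "k \<le> i"
      proof
        assume "(i,i+1) = (k,k+1)" then show ?thesis by simp
      next
        assume "\<exists>x y. (x,y) \<in> \<gamma> \<and> i = sh k x \<and> i + 1 = sh k y"
        then obtain x y where xy: "(x,y) \<in> \<gamma>" "i = sh k x" "i + 1 = sh k y" by blast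
        have "x < y" using Dn_arc[OF Suc.prems xy(1)] by simp
        show ?thesis
        proof (rule ccontr)
          assume "\<not> k \<le> i"
          then have "x < k" "i = x" using xy by (auto simp: sh_def split: if_splits)
          then have "y < k" "y = x + 1" using xy \<open>x<y\<close> by (auto simp: sh_def split: if_splits)
          then show False using b(2)[of x] xy(1) False by simp
        qed
      qed
    qed
    then have "rseq (Suc (Suc m)) (lk k \<gamma>) = k # rseq (Suc m) (remove_arc k (lk k \<gamma>))"
      by (simp add: rseq_Suc)
    then show ?thesis using rg False by (simp add: remove_lk)
  qed
qed




fun restr :: "nat list \<Rightarrow> bool" where
  "restr [] = True"
| "restr [a] = (a = 1)"
| "restr (a # b # r) = (1 \<le> a \<and> a \<le> b + 1 \<and> restr (b # r))"

lemma length_rseq: "length (rseq n \<delta>) = n"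
  by (induction n arbitrary: \<delta>) (auto simp: rseq_Suc)

lemma rseq_restr: "\<delta> \<in> Dn n \<Longrightarrow> restr (rseq n \<delta>)"
proof (induction n arbitrary: \<delta>)
  case 0 then show ?case by simp
next
  case (Suc m)
  define k where "k = lst \<delta>"
  have k: "(k,k+1) \<in> \<delta>" "\<And>i. (i,i+1) \<in> \<delta> \<Longrightarrow> k \<le> i" using lst[OF Suc.prems] k_def by auto
  have kr: "1 \<le> k" "k + 1 \<le> 2 * Suc m" using Dn_arc[OF Suc.prems k(1)] by auto
  define \<delta>' where "\<delta>' = remove_arc k \<delta>"
  have d': "\<delta>' \<in> Dn m" using remove_Dn[OF Suc.prems k(1)] \<delta>'_def by simp
  have r: "rseq (Suc m) \<delta> = k # rseq m \<delta>'" using rseq_Suc k_def \<delta>'_def by simp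
  have IH: "restr (rseq m \<delta>')" using Suc.IH[OF d'] .
  show ?case
  proof (cases m)
    case 0
    then show ?thesis using r kr by simp
  next
    case (Suc m')
    define k' where "k' = lst \<delta>'"
    have k': "(k',k'+1) \<in> \<delta>'" using lst[OF d'[unfolded Suc]] k'_def by auto
    have r': "rseq m \<delta>' = k' # rseq m' (remove_arc k' \<delta>')" using rseq_Suc Suc k'_def by simp
    have "k \<le> k' + 1"
    proof (rule ccontr)
      assume nk: "\<not> k \<le> k' + 1"
      obtain x y where xy: "(x,y) \<in> \<delta> - {(k,k+1)}" "k' = ush k x" "k'+1 = ush k y"
        using k' unfolding \<delta>'_def remove_arc_def by auto
      have o: "x \<noteq> k \<and> x \<noteq> k+1 \<and> y \<noteq> k \<and> y \<noteq> k+1" using Dn_other[OF Suc.prems k(1), of x y] xy by auto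
      have "x < y" using Dn_arc[OF Suc.prems, of x y] xy by auto
      have "y < k" using xy nk o by (auto simp: ush_def split: if_splits)
      then have "x = k'" "y = k'+1" using xy \<open>x<y\<close> by (auto simp: ush_def)
      then show False using k(2)[of k'] xy nk by auto
    qed
    then show ?thesis using r r' IH kr by simp
  qed
qed

lemma rseq_inj: "\<delta>1 \<in> Dn n \<Longrightarrow> \<delta>2 \<in> Dn n \<Longrightarrow> rseq n \<delta>1 = rseq n \<delta>2 \<Longrightarrow> \<delta>1 = \<delta>2"
proof (induction n arbitrary: \<delta>1 \<delta>2)
  case 0 then show ?case using Dn0 by blast
next
  case (Suc m)
  have eq: "lst \<delta>1 = lst \<delta>2" "rseq m (remove_arc (lst \<delta>1) \<delta>1) = rseq m (remove_arc (lst \<delta>2) \<delta>2)"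
    using Suc.prems(3) by (auto simp: rseq_Suc)
  have "remove_arc (lst \<delta>1) \<delta>1 = remove_arc (lst \<delta>2) \<delta>2"
    using Suc.IH[OF remove_Dn[OF Suc.prems(1) lst(1)[OF Suc.prems(1)]] remove_Dn[OF Suc.prems(2) lst(1)[OF Suc.prems(2)]] eq(2)] .
  then show ?case
    using lk_remove[OF Suc.prems(1) lst(1)[OF Suc.prems(1)]] lk_remove[OF Suc.prems(2) lst(1)[OF Suc.prems(2)]] eq(1)
    by metis
qed

lemma edia_rseq: "\<delta> \<in> Dn n \<Longrightarrow> edia (rseq n \<delta>) = \<delta>"
  unfolding edia_def length_rseq
  by (rule the_equality) (simp, metis rseq_inj)

lemma lin_l_eq:
  assumes d: "\<delta> \<in> Dn (Suc n)"
  shows "lin_l n k v \<delta> = (if (k,k+1) \<in> \<delta> then v (remove_arc k \<delta>) else 0)"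
proof (cases "(k,k+1) \<in> \<delta>")
  case True
  let ?g = "remove_arc k \<delta>"
  have g: "?g \<in> Dn n" using remove_Dn[OF d True] .
  have "\<And>\<gamma>. (lk k \<gamma> = \<delta>) = (\<gamma> = ?g)"
    using lk_remove[OF d True] remove_lk by metis
  then have "lin_l n k v \<delta> = (\<Sum>\<gamma>\<in>Dn n. if \<gamma> = ?g then v \<gamma> else 0)" unfolding lin_l_def by simp
  also have "\<dots> = v ?g" using g finite_Dn by (simp add: sum.delta')
  finally show ?thesis using True by simp
next
  case False
  then have "\<And>\<gamma>. lk k \<gamma> \<noteq> \<delta>" unfolding lk_def by auto
  then show ?thesis unfolding lin_l_def using False by simp
qed

lemma ins_le: "list_all2 (\<le>) s r \<Longrightarrow> restr (a # r) \<Longrightarrow> k \<le> a \<Longrightarrow> list_all2 (\<le>) (ins k s) (a # r)"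
proof (induction s arbitrary: k a r)
  case Nil then show ?case by simp
next
  case (Cons x xs)
  obtain y ys where r: "r = y # ys" using Cons.prems(1) by (cases r) auto
  have xy: "x \<le> y" "list_all2 (\<le>) xs ys" using Cons.prems(1) r by auto
  have ay: "a \<le> y + 1" "restr (y # ys)" using Cons.prems(2) r by auto
  show ?case
  proof (cases "x + 1 < k")
    case True
    have "list_all2 (\<le>) (ins (k-2) xs) (y # ys)"
      using Cons.IH[OF xy(2) ay(2)] Cons.prems(3) ay(1) by simp
    then show ?thesis using True r Cons.prems(3) by simp
  next
    case False
    then show ?thesis using Cons.prems r by simp
  qed
qed

lemma ins_parity: "even (sum_list (ins k s) + k + sum_list s)"
proof (induction s arbitrary: k)
  case Nil then show ?case by simp
next
  case (Cons x xs)
  show ?case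
  proof (cases "x + 1 < k")
    case True
    have "even (sum_list (ins (k-2) xs) + (k-2) + sum_list xs)" by (rule Cons.IH)
    then obtain c where c: "sum_list (ins (k-2) xs) + (k-2) + sum_list xs = 2 * c" by (rule evenE)
    have "sum_list (ins k (x # xs)) + k + sum_list (x # xs) = sum_list (ins (k-2) xs) + (k-2) + sum_list xs + 2 * (x + 1)"
      using True by simp
    also have "\<dots> = 2 * (c + x + 1)" using c by simp
    finally have h: "sum_list (ins k (x # xs)) + k + sum_list (x # xs) = 2 * (c + x + 1)" .
    show ?thesis unfolding h by simp
  next
    case False
    then have h: "sum_list (ins k (x # xs)) + k + sum_list (x # xs) = 2 * (k + x + sum_list xs)" by simp
    show ?thesis unfolding h by simp
  qed
qed

lemma neg1_pow_eq: "even (m + n) \<Longrightarrow> (-1::'a::ring_1)^m = (-1)^n"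
  by (cases "even m") auto


lemma qq_ge2: "(2::Qq) \<le> qq"
proof -
  have two: "(2::Qq) = Fract 2 1" using of_nat_fract[of 2] by simp
  have p: "([:0,1:] :: rat poly) - 2 = [:-2,1:]"
  proof -
    have h: "(2::rat poly) = [:2:]" using of_nat_poly[of 2] by simp
    show ?thesis by (simp only: h) simp
  qed
  have "(0::rat poly) < [:-2,1:]" by (simp add: less_poly_def pos_poly_pCons)
  hence "0 \<le> qq - 2" unfolding qq_def two using p by (simp add: zero_le_Fract_iff)
  thus ?thesis by simp
qed

lemma Delta_mono: "1 \<le> Delta k \<and> Delta k \<le> Delta (Suc k)"
proof (induction k rule: nat_less_induct)
  case (1 k)
  show ?case
  proof (cases k)
    case 0 then show ?thesis using qq_ge2 by simp
  next
    case (Suc m)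
    then have ih: "1 \<le> Delta m" "Delta m \<le> Delta k" "1 \<le> Delta k" using 1 by auto
    have "Delta (Suc k) = qq * Delta k - Delta m" using Suc by simp
    moreover have "qq * Delta k \<ge> 2 * Delta k" using qq_ge2 ih by (intro mult_right_mono) auto
    ultimately have "Delta k \<le> Delta (Suc k)" using ih by linarith
    thus ?thesis using ih by simp
  qed
qed

lemma Delta_pos: "0 < Delta k" using Delta_mono[of k] by auto



definition sv :: "nat list \<Rightarrow> diagram \<Rightarrow> Qq" where
  "sv \<alpha> \<delta> = (-1)^(sum_list \<alpha> + sum_list (rseq (length \<alpha>) \<delta>)) * eprime \<alpha> \<delta>"

lemma main: "restr \<alpha> \<Longrightarrow> \<alpha> \<noteq> [] \<Longrightarrow> \<delta> \<in> Dn (length \<alpha>) \<Longrightarrow>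
  0 \<le> sv \<alpha> \<delta> \<and> (0 < sv \<alpha> \<delta> \<longleftrightarrow> list_all2 (\<le>) (rseq (length \<alpha>) \<delta>) \<alpha>)"
proof (induction \<alpha> arbitrary: \<delta> rule: eprime.induct)
  case 1 then show ?case by simp
next
  case (2 a)
  have a: "a = 1" using 2 by simp
  have d: "\<delta> \<in> Dn (Suc 0)" using 2 by simp
  have "1 \<le> lst \<delta>" "lst \<delta> + 1 \<le> 2" using Dn_arc[OF d lst(1)[OF d]] by auto
  then have l: "lst \<delta> = 1" by simp
  then have r: "rseq 1 \<delta> = [1]" by (simp add: rseq_Suc)
  have "edia [1] = \<delta>" using edia_rseq[OF d] r by simp
  then have "eprime [a] \<delta> = 1" using a by (simp add: basis_def)
  then show ?case using r a by (simp add: sv_def)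
next
  case (3 a b rest)
  let ?r = "b # rest"
  let ?\<alpha> = "a # b # rest"
  define n where "n = length ?r"
  have d: "\<delta> \<in> Dn (Suc n)" using "3.prems" n_def by simp
  have ra: "1 \<le> a" "a \<le> b + 1" "restr ?r" using "3.prems"(1) by auto
  have IH1: "\<And>\<gamma>. \<gamma> \<in> Dn n \<Longrightarrow> 0 \<le> sv ?r \<gamma> \<and> (0 < sv ?r \<gamma> \<longleftrightarrow> list_all2 (\<le>) (rseq n \<gamma>) ?r)"
    using "3.IH"(1,3) ra(3) n_def by (cases "2 \<le> a") auto
  define \<rho> where "\<rho> = rseq (Suc n) \<delta>"
  have len: "length ?\<alpha> = Suc n" using n_def by simp
  define T1 where "T1 = (-1)^(sum_list ?\<alpha> + sum_list \<rho>) * lin_l n a (eprime ?r) \<delta>"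
  have T1a: "0 \<le> T1 \<and> (0 < T1 \<longrightarrow> list_all2 (\<le>) \<rho> ?\<alpha>)"
  proof (cases "(a,a+1) \<in> \<delta>")
    case True
    define \<gamma> where "\<gamma> = remove_arc a \<delta>"
    have g: "\<gamma> \<in> Dn n" using remove_Dn[OF d True] \<gamma>_def by simp
    have "lk a \<gamma> = \<delta>" using lk_remove[OF d True] \<gamma>_def by simp
    then have rho: "\<rho> = ins a (rseq n \<gamma>)" using rseq_lk[OF g, of a] \<rho>_def by simp
    have "even (sum_list \<rho> + a + sum_list (rseq n \<gamma>))" using rho ins_parity by simp
    then obtain m where m: "sum_list \<rho> + a + sum_list (rseq n \<gamma>) = 2 * m" by (rule evenE)
    have "(sum_list ?\<alpha> + sum_list \<rho>) + (sum_list ?r + sum_list (rseq n \<gamma>)) = 2 * (m + sum_list ?r)"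
      using m by simp
    then have "even ((sum_list ?\<alpha> + sum_list \<rho>) + (sum_list ?r + sum_list (rseq n \<gamma>)))"
      by (metis dvd_triv_left)
    then have sg: "(-1::Qq)^(sum_list ?\<alpha> + sum_list \<rho>) = (-1)^(sum_list ?r + sum_list (rseq n \<gamma>))"
      by (rule neg1_pow_eq)
    have "T1 = sv ?r \<gamma>" unfolding T1_def sv_def
      using lin_l_eq[OF d] True sg \<gamma>_def n_def by simp
    moreover have "list_all2 (\<le>) (rseq n \<gamma>) ?r \<Longrightarrow> list_all2 (\<le>) \<rho> ?\<alpha>"
      using rho ins_le[of "rseq n \<gamma>" ?r a a] "3.prems"(1) by simp
    ultimately show ?thesis using IH1[OF g] by auto
  next
    case False
    then show ?thesis unfolding T1_def using lin_l_eq[OF d] by simp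
  qed
  have T1b: "lst \<delta> = a \<Longrightarrow> list_all2 (\<le>) (tl \<rho>) ?r \<Longrightarrow> 0 < T1"
  proof -
    assume l: "lst \<delta> = a" and le: "list_all2 (\<le>) (tl \<rho>) ?r"
    have True: "(a,a+1) \<in> \<delta>" using lst(1)[OF d] l by simp
    define \<gamma> where "\<gamma> = remove_arc a \<delta>"
    have g: "\<gamma> \<in> Dn n" using remove_Dn[OF d True] \<gamma>_def by simp
    have rho: "\<rho> = a # rseq n \<gamma>" using rseq_Suc[of n \<delta>] l \<rho>_def \<gamma>_def by simp
    have sg: "(-1::Qq)^(sum_list ?\<alpha> + sum_list \<rho>) = (-1)^(sum_list ?r + sum_list (rseq n \<gamma>))"
    proof (rule neg1_pow_eq)
      have "sum_list ?\<alpha> + sum_list \<rho> + (sum_list ?r + sum_list (rseq n \<gamma>)) = 2 * (a + sum_list ?r + sum_list (rseq n \<gamma>))"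
        by (simp add: rho)
      then show "even (sum_list ?\<alpha> + sum_list \<rho> + (sum_list ?r + sum_list (rseq n \<gamma>)))"
        by (metis dvd_triv_left)
    qed
    have "T1 = sv ?r \<gamma>" unfolding T1_def sv_def
      using lin_l_eq[OF d] True sg \<gamma>_def n_def by simp
    then show "0 < T1" using IH1[OF g] le rho by simp
  qed
  have hd1: "1 \<le> lst \<delta>" using Dn_arc[OF d lst(1)[OF d]] by simp
  have rho_cons: "\<rho> = lst \<delta> # tl \<rho>" using rseq_Suc[of n \<delta>] \<rho>_def by simp
  show ?case
  proof (cases "2 \<le> a")
    case True
    let ?\<alpha>' = "(a-1) # b # rest"
    have IH2: "0 \<le> sv ?\<alpha>' \<delta> \<and> (0 < sv ?\<alpha>' \<delta> \<longleftrightarrow> list_all2 (\<le>) \<rho> ?\<alpha>')"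
    proof -
      have rr: "restr ?\<alpha>'" using True ra by (simp; arith)
      have d': "\<delta> \<in> Dn (length ?\<alpha>')" using d n_def by simp
      have "length ?\<alpha>' = Suc n" using n_def by simp
      then show ?thesis using "3.IH"(2)[OF True rr _ d'] \<rho>_def by simp
    qed
    define c where "c = Delta (a - 2) / Delta (a - 1)"
    have c: "0 < c" unfolding c_def using Delta_pos by simp
    have sa: "sum_list ?\<alpha> = Suc (sum_list ?\<alpha>')" using True by simp
    have e: "eprime ?\<alpha> \<delta> = lin_l n a (eprime ?r) \<delta> - c * eprime ?\<alpha>' \<delta>"
      using True unfolding c_def n_def by simp
    have sa2: "sum_list ?\<alpha> + sum_list \<rho> = Suc (sum_list ?\<alpha>' + sum_list \<rho>)" using sa by simp
    have p: "(-1::Qq)^(sum_list ?\<alpha> + sum_list \<rho>) = - ((-1)^(sum_list ?\<alpha>' + sum_list \<rho>))"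
      unfolding sa2 power_Suc by simp
    have len': "length ?\<alpha>' = Suc n" using n_def by simp
    have "sv ?\<alpha> \<delta> = (-1)^(sum_list ?\<alpha> + sum_list \<rho>) * (lin_l n a (eprime ?r) \<delta> - c * eprime ?\<alpha>' \<delta>)"
      unfolding sv_def len \<rho>_def e ..
    also have "\<dots> = T1 + c * sv ?\<alpha>' \<delta>"
      unfolding T1_def sv_def len' \<rho>_def[symmetric] p by (simp add: algebra_simps)
    finally have sv_eq: "sv ?\<alpha> \<delta> = T1 + c * sv ?\<alpha>' \<delta>" .
    have mono: "list_all2 (\<le>) \<rho> ?\<alpha>' \<Longrightarrow> list_all2 (\<le>) \<rho> ?\<alpha>"
    proof -
      assume h: "list_all2 (\<le>) \<rho> ?\<alpha>'"
      then have "lst \<delta> \<le> a - 1" "list_all2 (\<le>) (tl \<rho>) ?r" using rho_cons by (metis list_all2_Cons)+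
      then show ?thesis using rho_cons by (metis list_all2_Cons diff_le_self order_trans)
    qed
    have bck: "list_all2 (\<le>) \<rho> ?\<alpha> \<Longrightarrow> 0 < T1 \<or> 0 < sv ?\<alpha>' \<delta>"
    proof -
      assume le: "list_all2 (\<le>) \<rho> ?\<alpha>"
      then have le2: "lst \<delta> \<le> a" "list_all2 (\<le>) (tl \<rho>) ?r" using rho_cons by (metis list_all2_Cons)+
      show ?thesis
      proof (cases "lst \<delta> = a")
        case True then show ?thesis using T1b le2 by simp
      next
        case False
        then have "lst \<delta> \<le> a - 1" using le2 by simp
        then have "list_all2 (\<le>) \<rho> ?\<alpha>'" using le2 rho_cons by (metis list_all2_Cons)
        then show ?thesis using IH2 by simp
      qed
    qed
    have c2: "0 \<le> c * sv ?\<alpha>' \<delta>" using c IH2 by simp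
    have c3: "(0 < c * sv ?\<alpha>' \<delta>) = (0 < sv ?\<alpha>' \<delta>)" using c by (simp add: zero_less_mult_iff)
    have "0 \<le> sv ?\<alpha> \<delta>" using sv_eq T1a c2 by simp
    moreover have "0 < sv ?\<alpha> \<delta> \<longleftrightarrow> 0 < T1 \<or> 0 < sv ?\<alpha>' \<delta>"
      using sv_eq T1a c2 c3 by auto
    ultimately show ?thesis using T1a IH2 mono bck len \<rho>_def by auto
  next
    case False
    then have a1: "a = 1" using ra by simp
    have e: "eprime ?\<alpha> \<delta> = lin_l n a (eprime ?r) \<delta>"
      using False a1 unfolding n_def by simp
    have "sv ?\<alpha> \<delta> = T1" unfolding sv_def T1_def len \<rho>_def e ..
    moreover have "list_all2 (\<le>) \<rho> ?\<alpha> \<Longrightarrow> 0 < T1"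
    proof -
      assume le: "list_all2 (\<le>) \<rho> ?\<alpha>"
      then have le2: "lst \<delta> \<le> a" "list_all2 (\<le>) (tl \<rho>) ?r" using rho_cons by (metis list_all2_Cons)+
      then have "lst \<delta> = a" using hd1 a1 by simp
      then show ?thesis using T1b le2 by simp
    qed
    ultimately show ?thesis using T1a len \<rho>_def by auto
  qed
qed


theorem mainTheorem10:
  fixes n :: nat and \<alpha> :: "nat list"
  assumes "1 \<le> n" and "\<alpha> \<in> RS n"
  shows "\<forall>\<beta>\<in>RS n. (eprime \<alpha> (edia \<beta>) \<noteq> 0 \<longleftrightarrow> list_all2 (\<le>) \<beta> \<alpha>)"
proof
  fix \<beta> assume b: "\<beta> \<in> RS n"
  obtain \<delta>a where da: "\<delta>a \<in> Dn n" "\<alpha> = rseq n \<delta>a" using assms(2) unfolding RS_def by blast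
  obtain \<delta> where d: "\<delta> \<in> Dn n" "\<beta> = rseq n \<delta>" using b unfolding RS_def by blast
  have ra: "restr \<alpha>" using rseq_restr[OF da(1)] da(2) by simp
  have la: "length \<alpha> = n" using length_rseq da(2) by simp
  have ne: "\<alpha> \<noteq> []" using la assms(1) by auto
  have ed: "edia \<beta> = \<delta>" using edia_rseq[OF d(1)] d(2) by simp
  have M: "0 \<le> sv \<alpha> \<delta> \<and> (0 < sv \<alpha> \<delta> \<longleftrightarrow> list_all2 (\<le>) \<beta> \<alpha>)"
    using main[OF ra ne, of \<delta>] la d by simp
  have "(sv \<alpha> \<delta> \<noteq> 0) = (eprime \<alpha> \<delta> \<noteq> 0)" unfolding sv_def by simp
  then show "eprime \<alpha> (edia \<beta>) \<noteq> 0 \<longleftrightarrow> list_all2 (\<le>) \<beta> \<alpha>" using M ed by auto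
qed

end
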